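(* Let $1\le p<\infty$. Let $f:\mathbb R\to\mathbb R$ be Henstock–Kurzweil integrable on every compact interval and suppose (a) the Henstock–Kurzweil integral $\int_{-\infty}^\infty f(t)\,dt$ exists and equals $0$, and (b) the Henstock–Kurzweil integral $\int_{-\infty}^\infty |t|^\alpha f(t)\,dt$ exists for some $\alpha>1/p$. Then $F(x)=\int_{-\infty}^x f(t)\,dt$ belongs to $L^p(\mathbb R)$, and hence $f=F'\in L'^{\,p}$.
   Context: $L'^{\,p}=\{f\in\mathcal S' : f=F' \text{ (distributional derivative) for some } F\in L^p(\mathbb R)\}$. *)

theory Defs
  imports "HOL-Analysis.Analysis"
begin

definition in_Lp :: "real \<Rightarrow> (real \<Rightarrow> real) \<Rightarrow> bool" where
  "in_Lp p F \<longleftrightarrow> F \<in> borel_measurable lebesgue \<and> integrable lebesgue (\<lambda>x. \<bar>F x\<bar> powr p)"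

definition test_function :: "(real \<Rightarrow> real) \<Rightarrow> bool" where
  "test_function \<phi> \<longleftrightarrow> (\<forall>n. ((deriv ^^ n) \<phi>) differentiable_on UNIV)
      \<and> compact (closure {x. \<phi> x \<noteq> 0})"

definition distr_deriv :: "(real \<Rightarrow> real) \<Rightarrow> (real \<Rightarrow> real) \<Rightarrow> bool" where
  "distr_deriv F f \<longleftrightarrow> (\<forall>\<phi>. test_function \<phi> \<longrightarrow>
      (\<lambda>x. f x * \<phi> x) integrable_on UNIV \<and>
      (\<lambda>x. F x * deriv \<phi> x) integrable_on UNIV \<and>
      integral UNIV (\<lambda>x. F x * deriv \<phi> x) = - integral UNIV (\<lambda>x. f x * \<phi> x))"

end

theory Submission
  imports Defs
begin


lemma hk_tail:
  fixes h :: "real \<Rightarrow> real"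
  assumes "(h has_integral L) UNIV" "e > 0"
  shows "\<exists>B>0. \<forall>a b. a \<le> -B \<longrightarrow> B \<le> b \<longrightarrow> \<bar>integral {a..b} h - L\<bar> < e"
proof -
  from assms(1)[unfolded has_integral_alt'] assms(2)
  obtain B where B: "B > 0" "\<And>a b. ball 0 B \<subseteq> cbox a b \<Longrightarrow>
     norm (integral (cbox a b) (\<lambda>x. if x \<in> UNIV then h x else 0) - L) < e"
    by blast
  show ?thesis
  proof (intro exI[of _ B] conjI allI impI)
    fix a b :: real assume ab: "a \<le> -B" "B \<le> b"
    have "ball 0 B \<subseteq> cbox a b" using ab by (auto simp: dist_real_def)
    from B(2)[OF this] show "\<bar>integral {a..b} h - L\<bar> < e" by simp
  qed (use B in auto)
qed

lemma hk_halfline_integrable: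
  fixes h :: "real \<Rightarrow> real"
  assumes "(h has_integral L) UNIV"
  shows "h integrable_on {..x}"
proof -
  have hi: "h integrable_on {a..b}" for a b
    using assms integrable_on_subinterval by blast
  show ?thesis
  unfolding integrable_alt[of h]
  proof (intro conjI allI impI)
    fix a b :: real
    have "{..x} \<inter> cbox a b = {a..min x b}" by (auto simp: cbox_interval)
    then have "h integrable_on ({..x} \<inter> cbox a b)"
      using hi[of a "min x b"] by simp
    then show "(\<lambda>t. if t \<in> {..x} then h t else 0) integrable_on cbox a b"
      unfolding integrable_restrict_Int .
  next
    fix e :: real assume e: "e > 0"
    then obtain B where B: "B > 0" "\<And>a b. a \<le> -B \<Longrightarrow> B \<le> b \<Longrightarrow> \<bar>integral {a..b} h - L\<bar> < e/2"
      using hk_tail[OF assms, of "e/2"] by auto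
    define B1 where "B1 = max B (\<bar>x\<bar> + 1)"
    show "\<exists>B>0. \<forall>a b c d. ball 0 B \<subseteq> cbox a b \<and> ball 0 B \<subseteq> cbox c d \<longrightarrow>
        norm (integral (cbox a b) (\<lambda>t. if t \<in> {..x} then h t else 0) -
              integral (cbox c d) (\<lambda>t. if t \<in> {..x} then h t else 0)) < e"
    proof (intro exI[of _ B1] conjI allI impI)
      show "B1 > 0" using B by (simp add: B1_def)
      fix a b c d :: real
      assume "ball 0 B1 \<subseteq> cbox a b \<and> ball 0 B1 \<subseteq> cbox c d"
      then have sub: "ball 0 B1 \<subseteq> {a..b}" "ball 0 B1 \<subseteq> {c..d}" by (auto simp: cbox_interval)
      have le: "a \<le> -B1" "B1 \<le> b" "c \<le> -B1" "B1 \<le> d"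
      proof -
        have "B1 > 0" using B by (simp add: B1_def)
        then have "cball 0 B1 \<subseteq> {a..b}" "cball 0 B1 \<subseteq> {c..d}"
          using sub closure_minimal[OF sub(1)] closure_minimal[OF sub(2)] closure_ball[of B1 0]
          by auto
        moreover have "-B1 \<in> cball 0 B1" "B1 \<in> cball 0 B1" using \<open>B1 > 0\<close> by auto
        ultimately have "-B1 \<in> {a..b}" "B1 \<in> {a..b}" "-B1 \<in> {c..d}" "B1 \<in> {c..d}" by (meson subsetD)+
        then show "a \<le> -B1" "B1 \<le> b" "c \<le> -B1" "B1 \<le> d" by auto
      qed
      have x1: "a \<le> x" "x \<le> b" "c \<le> x" "x \<le> d" "x \<le> B1" "B \<le> B1"
        using le by (auto simp: B1_def)
      have r1: "integral (cbox a b) (\<lambda>t. if t \<in> {..x} then h t else 0) = integral {a..x} h"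
        using x1 proof -
          have "{..x} \<inter> cbox a b = {a..x}" "{..x} \<inter> cbox c d = {c..x}" using x1 by (auto simp: cbox_interval)
          then show ?thesis unfolding integral_restrict_Int using x1 by (simp add: min_absorb1)
        qed
      have r2: "integral (cbox c d) (\<lambda>t. if t \<in> {..x} then h t else 0) = integral {c..x} h"
        using x1 proof -
          have "{..x} \<inter> cbox a b = {a..x}" "{..x} \<inter> cbox c d = {c..x}" using x1 by (auto simp: cbox_interval)
          then show ?thesis unfolding integral_restrict_Int using x1 by (simp add: min_absorb1)
        qed
      have c1: "integral {a..x} h = integral {a..B1} h - integral {x..B1} h"
        using Henstock_Kurzweil_Integration.integral_combine[OF x1(1) x1(5) hi[of a B1]] by simp
      have c2: "integral {c..x} h = integral {c..B1} h - integral {x..B1} h"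
        using Henstock_Kurzweil_Integration.integral_combine[OF x1(3) x1(5) hi[of c B1]] by simp
      have "\<bar>integral {a..B1} h - L\<bar> < e/2" "\<bar>integral {c..B1} h - L\<bar> < e/2"
        using B(2) le x1 by auto
      then show "norm (integral (cbox a b) (\<lambda>t. if t \<in> {..x} then h t else 0) -
              integral (cbox c d) (\<lambda>t. if t \<in> {..x} then h t else 0)) < e"
        unfolding r1 r2 c1 c2 by simp (smt (verit))
    qed
  qed
qed

lemma hk_halfline_approx:
  fixes h :: "real \<Rightarrow> real"
  assumes "(h has_integral L) UNIV" "e > 0"
  shows "\<exists>A. \<forall>a\<le>A. \<bar>integral {a..y} h - integral {..y} h\<bar> < e"
proof -
  have "(h has_integral integral {..y} h) {..y}"
    using hk_halfline_integrable[OF assms(1)] by (simp add: has_integral_integral)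
  from this[unfolded has_integral_alt'] assms(2)
  obtain B where B: "B > 0" "\<And>a b. ball 0 B \<subseteq> cbox a b \<Longrightarrow>
     norm (integral (cbox a b) (\<lambda>x. if x \<in> {..y} then h x else 0) - integral {..y} h) < e"
    by blast
  show ?thesis
  proof (intro exI[of _ "min (-B) y"] allI impI)
    fix a assume a: "a \<le> min (-B) y"
    define b where "b = max B y"
    have "ball 0 B \<subseteq> cbox a b" using a by (auto simp: dist_real_def b_def)
    note B(2)[OF this]
    moreover have "{..y} \<inter> cbox a b = {a..y}" using a by (auto simp: b_def)
    ultimately show "\<bar>integral {a..y} h - integral {..y} h\<bar> < e"
      unfolding integral_restrict_Int using a by (simp add: b_def)
  qed
qed

lemma hk_halfline_diff:
  fixes h :: "real \<Rightarrow> real"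
  assumes "(h has_integral L) UNIV" "x \<le> y"
  shows "integral {..y} h = integral {..x} h + integral {x..y} h"
proof -
  have "(h has_integral integral {..x} h) {..x}"
    using hk_halfline_integrable[OF assms(1)] by (simp add: has_integral_integral)
  moreover have "(h has_integral integral {x..y} h) {x..y}"
    using assms(1) integrable_on_subinterval by (blast intro: has_integral_integral)
  ultimately have "(h has_integral (integral {..x} h + integral {x..y} h)) ({..x} \<union> {x..y})"
    by (rule has_integral_Un) (use assms in \<open>auto simp: Int_commute\<close>)
  moreover have "{..x} \<union> {x..y} = {..y}" using assms by auto
  ultimately show ?thesis by (simp add: integral_unique)
qed

lemma tri_abs: "\<bar>a - b\<bar> < e1 \<Longrightarrow> \<bar>a - c\<bar> < e2 \<Longrightarrow> \<bar>b - c\<bar> < e1 + e2" for a b c e1 e2 :: real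
  by linarith

lemma tri_abs2: "p + q = r \<Longrightarrow> \<bar>r - L\<bar> < e \<Longrightarrow> \<bar>q - L\<bar> < e \<Longrightarrow> \<bar>p - H\<bar> < e \<Longrightarrow> \<bar>H\<bar> < 3*e"
  for p q r L e H :: real
  by linarith

lemma hk_lim_top:
  fixes h :: "real \<Rightarrow> real"
  assumes "(h has_integral L) UNIV"
  shows "((\<lambda>y. integral {..y} h) \<longlongrightarrow> L) at_top"
proof (rule tendstoI)
  fix e :: real assume e: "e > 0"
  then obtain B where B: "B > 0" "\<And>a b. a \<le> -B \<Longrightarrow> B \<le> b \<Longrightarrow> \<bar>integral {a..b} h - L\<bar> < e/2"
    using hk_tail[OF assms, of "e/2"] by auto
  have "\<bar>integral {..y} h - L\<bar> < e" if y: "y \<ge> B" for y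
  proof -
    obtain A where A: "\<And>a. a \<le> A \<Longrightarrow> \<bar>integral {a..y} h - integral {..y} h\<bar> < e/2"
      using hk_halfline_approx[OF assms, of "e/2" y] e by auto
    have "\<bar>integral {min A (-B)..y} h - integral {..y} h\<bar> < e/2" by (rule A) simp
    moreover have "\<bar>integral {min A (-B)..y} h - L\<bar> < e/2" using y by (intro B) auto
    ultimately show ?thesis using tri_abs[of "integral {min A (-B)..y} h" "integral {..y} h" "e/2" L "e/2"] by simp
  qed
  then show "\<forall>\<^sub>F y in at_top. dist (integral {..y} h) L < e"
    unfolding eventually_at_top_linorder dist_real_def by blast
qed

lemma hk_lim_bot:
  fixes h :: "real \<Rightarrow> real"
  assumes "(h has_integral L) UNIV"
  shows "((\<lambda>y. integral {..y} h) \<longlongrightarrow> 0) at_bot"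
proof (rule tendstoI)
  fix e :: real assume e: "e > 0"
  then obtain B where B: "B > 0" "\<And>a b. a \<le> -B \<Longrightarrow> B \<le> b \<Longrightarrow> \<bar>integral {a..b} h - L\<bar> < e/3"
    using hk_tail[OF assms, of "e/3"] by auto
  have "\<bar>integral {..y} h\<bar> < e" if y: "y \<le> -B" for y
  proof -
    obtain A where A: "\<And>a. a \<le> A \<Longrightarrow> \<bar>integral {a..y} h - integral {..y} h\<bar> < e/3"
      using hk_halfline_approx[OF assms, of "e/3" y] e by auto
    define a where "a = min A y"
    have 1: "\<bar>integral {a..y} h - integral {..y} h\<bar> < e/3" by (rule A) (simp add: a_def)
    have hi: "h integrable_on {a..B}" using assms integrable_on_subinterval by blast
    have "integral {a..y} h + integral {y..B} h = integral {a..B} h"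
      by (rule Henstock_Kurzweil_Integration.integral_combine[OF _ _ hi]) (use y B in \<open>auto simp: a_def\<close>)
    moreover have "\<bar>integral {a..B} h - L\<bar> < e/3" "\<bar>integral {y..B} h - L\<bar> < e/3"
      using y B by (auto intro!: B(2) simp: a_def)
    ultimately show ?thesis using 1 tri_abs2[of "integral {a..y} h" "integral {y..B} h" "integral {a..B} h" L "e/3" "integral {..y} h"] by simp
  qed
  then show "\<forall>\<^sub>F y in at_bot. dist (integral {..y} h) 0 < e"
    unfolding eventually_at_bot_linorder dist_real_def by auto
qed

lemma hk_cont:
  fixes h :: "real \<Rightarrow> real"
  assumes "(h has_integral L) UNIV"
  shows "continuous_on UNIV (\<lambda>y. integral {..y} h)"
proof (rule continuous_at_imp_continuous_on, intro ballI)
  fix x :: real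
  have "continuous_on {x-1..x+1} (\<lambda>y. integral {..x-1} h + integral {x-1..y} h)"
    using assms integrable_on_subinterval
    by (intro continuous_intros indefinite_integral_continuous_1) blast
  then have "continuous_on {x-1..x+1} (\<lambda>y. integral {..y} h)"
    by (rule continuous_on_eq) (auto simp: hk_halfline_diff[OF assms])
  then show "isCont (\<lambda>y. integral {..y} h) x"
    by (rule continuous_on_interior) auto
qed

lemma hk_bounded:
  fixes h :: "real \<Rightarrow> real"
  assumes "(h has_integral L) UNIV"
  shows "\<exists>M. \<forall>y. \<bar>integral {..y} h\<bar> \<le> M"
proof -
  let ?H = "\<lambda>y. integral {..y} h"
  have "\<forall>\<^sub>F y in at_top. dist (?H y) L < 1" using hk_lim_top[OF assms] by (rule tendstoD) simp
  then obtain N1 where N1: "\<And>y. y \<ge> N1 \<Longrightarrow> \<bar>?H y - L\<bar> < 1"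
    unfolding eventually_at_top_linorder dist_real_def by blast
  have "\<forall>\<^sub>F y in at_bot. dist (?H y) 0 < 1" using hk_lim_bot[OF assms] by (rule tendstoD) simp
  then obtain N2 where N2: "\<And>y. y \<le> N2 \<Longrightarrow> \<bar>?H y\<bar> < 1"
    unfolding eventually_at_bot_linorder dist_real_def by auto
  have "compact (?H ` {N2..N1})"
    by (rule compact_continuous_image) (use hk_cont[OF assms] continuous_on_subset in auto)
  then obtain M0 where M0: "\<And>y. y \<in> {N2..N1} \<Longrightarrow> \<bar>?H y\<bar> \<le> M0"
  proof -
    assume r: "\<And>M0. (\<And>y. y \<in> {N2..N1} \<Longrightarrow> \<bar>?H y\<bar> \<le> M0) \<Longrightarrow> thesis"
    from compact_imp_bounded[OF \<open>compact (?H ` {N2..N1})\<close>]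
    obtain M0 where "\<forall>x\<in>?H ` {N2..N1}. norm x \<le> M0" unfolding bounded_iff by blast
    then show thesis by (intro r) auto
  qed
  have "\<bar>?H y\<bar> \<le> max M0 (\<bar>L\<bar> + 1)" for y
  proof (cases "y \<le> N2")
    case True then show ?thesis using N2[of y] by auto
  next
    case False
    show ?thesis
    proof (cases "y \<ge> N1")
      case True then show ?thesis using N1[of y] by auto
    next
      case False then show ?thesis using M0[of y] \<open>\<not> y \<le> N2\<close> by auto
    qed
  qed
  then show ?thesis by blast
qed

lemma hk_interval_bound:
  fixes h :: "real \<Rightarrow> real"
  assumes "(h has_integral L) UNIV"
  shows "\<exists>M. \<forall>u v. \<bar>integral {u..v} h\<bar> \<le> M"
proof -
  obtain M where M: "\<And>y. \<bar>integral {..y} h\<bar> \<le> M" using hk_bounded[OF assms] by blast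
  have "\<bar>integral {u..v} h\<bar> \<le> 2*M" for u v
  proof (cases "u \<le> v")
    case True
    then show ?thesis using hk_halfline_diff[OF assms True] M[of u] M[of v] by auto
  next
    case False
    then show ?thesis using M[of u] by auto
  qed
  then show ?thesis by blast
qed



lemma smvt_bound:
  fixes f \<psi> :: "real \<Rightarrow> real"
  assumes uv: "u \<le> v" and fi: "f integrable_on {u..v}"
    and mono: "\<And>s t. u \<le> s \<Longrightarrow> s \<le> t \<Longrightarrow> t \<le> v \<Longrightarrow> \<psi> s \<le> \<psi> t"
    and eta: "\<And>s t. u \<le> s \<Longrightarrow> s \<le> t \<Longrightarrow> t \<le> v \<Longrightarrow> \<bar>integral {s..t} f\<bar> \<le> \<eta>"
  shows "(\<lambda>t. \<psi> t * f t) integrable_on {u..v} \<and>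
         \<bar>integral {u..v} (\<lambda>t. \<psi> t * f t)\<bar> \<le> (\<bar>\<psi> u\<bar> + \<bar>\<psi> v\<bar>) * \<eta>"
proof -
  obtain c where c: "c \<in> {u..v}"
    and hi: "((\<lambda>x. \<psi> x * f x) has_integral (\<psi> u * integral {u..c} f + \<psi> v * integral {c..v} f)) {u..v}"
    using second_mean_value_theorem_full[OF fi uv, of \<psi>] mono by blast
  have e1: "\<bar>integral {u..c} f\<bar> \<le> \<eta>" "\<bar>integral {c..v} f\<bar> \<le> \<eta>" using c eta by auto
  have "\<bar>\<psi> u * integral {u..c} f + \<psi> v * integral {c..v} f\<bar> \<le> \<bar>\<psi> u\<bar> * \<bar>integral {u..c} f\<bar> + \<bar>\<psi> v\<bar> * \<bar>integral {c..v} f\<bar>"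
    by (simp add: abs_mult abs_triangle_ineq[THEN order_trans])
  also have "\<dots> \<le> \<bar>\<psi> u\<bar> * \<eta> + \<bar>\<psi> v\<bar> * \<eta>"
    by (intro add_mono mult_left_mono e1) auto
  finally show ?thesis using hi integral_unique[OF hi]
    by (auto simp: integrable_on_def distrib_right)
qed

lemma lip_bound:
  fixes f \<psi> :: "real \<Rightarrow> real"
  assumes uv: "u \<le> v" and fi: "f integrable_on {u..v}" and K: "K \<ge> 0"
    and lip: "\<And>s t. s \<in> {u..v} \<Longrightarrow> t \<in> {u..v} \<Longrightarrow> \<bar>\<psi> s - \<psi> t\<bar> \<le> K * \<bar>s - t\<bar>"
    and eta: "\<And>s t. u \<le> s \<Longrightarrow> s \<le> t \<Longrightarrow> t \<le> v \<Longrightarrow> \<bar>integral {s..t} f\<bar> \<le> \<eta>"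
  shows "(\<lambda>t. \<psi> t * f t) integrable_on {u..v} \<and>
         \<bar>integral {u..v} (\<lambda>t. \<psi> t * f t)\<bar> \<le> (2 * \<bar>\<psi> u\<bar> + 3 * K * (v - u)) * \<eta>"
proof -
  have eta0: "\<eta> \<ge> 0" using eta[of u u] uv by simp
  define \<psi>1 where "\<psi>1 t = \<psi> t + K * (t - u)" for t
  define \<psi>2 where "\<psi>2 t = K * (t - u)" for t
  have m1: "\<psi>1 s \<le> \<psi>1 t" if "u \<le> s" "s \<le> t" "t \<le> v" for s t
  proof -
    have "\<bar>\<psi> t - \<psi> s\<bar> \<le> K * \<bar>t - s\<bar>" using lip[of t s] that by auto
    then show ?thesis using that by (auto simp: \<psi>1_def algebra_simps abs_le_iff)
  qed
  have m2: "\<psi>2 s \<le> \<psi>2 t" if "u \<le> s" "s \<le> t" "t \<le> v" for s t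
    using that K by (auto simp: \<psi>2_def intro: mult_left_mono)
  have A1: "(\<lambda>t. \<psi>1 t * f t) integrable_on {u..v} \<and>
         \<bar>integral {u..v} (\<lambda>t. \<psi>1 t * f t)\<bar> \<le> (\<bar>\<psi>1 u\<bar> + \<bar>\<psi>1 v\<bar>) * \<eta>"
    by (rule smvt_bound[OF uv fi]) (auto intro: m1 eta)
  have A2: "(\<lambda>t. \<psi>2 t * f t) integrable_on {u..v} \<and>
         \<bar>integral {u..v} (\<lambda>t. \<psi>2 t * f t)\<bar> \<le> (\<bar>\<psi>2 u\<bar> + \<bar>\<psi>2 v\<bar>) * \<eta>"
    by (rule smvt_bound[OF uv fi]) (auto intro: m2 eta)
  have b1: "\<bar>\<psi>1 u\<bar> + \<bar>\<psi>1 v\<bar> \<le> 2 * \<bar>\<psi> u\<bar> + 2 * K * (v - u)"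
  proof -
    have "\<bar>\<psi> v - \<psi> u\<bar> \<le> K * \<bar>v - u\<bar>" using lip[of v u] uv by auto
    then show ?thesis using uv K by (auto simp: \<psi>1_def abs_le_iff)
  qed
  have b2: "\<bar>\<psi>2 u\<bar> + \<bar>\<psi>2 v\<bar> \<le> K * (v - u)" using uv K by (simp add: \<psi>2_def)
  have eq: "(\<lambda>t. \<psi> t * f t) = (\<lambda>t. \<psi>1 t * f t - \<psi>2 t * f t)"
    by (auto simp: \<psi>1_def \<psi>2_def algebra_simps)
  have int: "(\<lambda>t. \<psi> t * f t) integrable_on {u..v}"
    unfolding eq using A1 A2 by (intro integrable_diff) auto
  have "integral {u..v} (\<lambda>t. \<psi> t * f t) =
        integral {u..v} (\<lambda>t. \<psi>1 t * f t) - integral {u..v} (\<lambda>t. \<psi>2 t * f t)"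
    unfolding eq using A1 A2 by (intro integral_diff) auto
  moreover have "\<bar>integral {u..v} (\<lambda>t. \<psi>1 t * f t)\<bar> \<le> (2 * \<bar>\<psi> u\<bar> + 2 * K * (v - u)) * \<eta>"
    using A1 b1 eta0 by (meson mult_right_mono order_trans)
  moreover have "\<bar>integral {u..v} (\<lambda>t. \<psi>2 t * f t)\<bar> \<le> K * (v - u) * \<eta>"
    using A2 b2 eta0 by (meson mult_right_mono order_trans)
  ultimately have "\<bar>integral {u..v} (\<lambda>t. \<psi> t * f t)\<bar> \<le> (2 * \<bar>\<psi> u\<bar> + 2 * K * (v - u)) * \<eta> + K * (v - u) * \<eta>"
    by linarith
  also have "\<dots> = (2 * \<bar>\<psi> u\<bar> + 3 * K * (v - u)) * \<eta>" by (simp add: algebra_simps)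
  finally show ?thesis using int by simp
qed



lemma deriv_approx:
  fixes \<phi> :: "real \<Rightarrow> real"
  assumes "(\<phi> has_real_derivative D) (at x)" "e > 0"
  shows "\<exists>d>0. \<forall>y. \<bar>y - x\<bar> < d \<longrightarrow> \<bar>\<phi> y - \<phi> x - D * (y - x)\<bar> \<le> e * \<bar>y - x\<bar>"
proof -
  have "((\<lambda>y. (\<phi> y - \<phi> x) / (y - x)) \<longlongrightarrow> D) (at x)"
    using assms(1) has_field_derivative_iff by blast
  then have "\<forall>\<^sub>F y in at x. dist ((\<phi> y - \<phi> x) / (y - x)) D < e" using assms(2) by (rule tendstoD)
  then obtain d where d: "d > 0" "\<And>y. y \<noteq> x \<Longrightarrow> dist y x < d \<Longrightarrow> dist ((\<phi> y - \<phi> x) / (y - x)) D < e"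
    unfolding eventually_at by auto
  have "\<bar>\<phi> y - \<phi> x - D * (y - x)\<bar> \<le> e * \<bar>y - x\<bar>" if y: "\<bar>y - x\<bar> < d" for y
  proof (cases "y = x")
    case False
    then have "\<bar>(\<phi> y - \<phi> x) / (y - x) - D\<bar> < e" using d(2)[of y] y by (simp add: dist_real_def)
    moreover have "\<phi> y - \<phi> x - D * (y - x) = (y - x) * ((\<phi> y - \<phi> x) / (y - x) - D)"
      using False by (simp add: field_simps)
    ultimately show ?thesis
      by (simp add: abs_mult mult.commute[of e] mult_left_mono less_imp_le)
  qed simp
  then show ?thesis using d(1) by blast
qed

lemma lipschitz_from_deriv:
  fixes \<phi> \<phi>' :: "real \<Rightarrow> real"
  assumes "\<And>x. (\<phi> has_real_derivative \<phi>' x) (at x)"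
    and "\<And>x. x \<in> {a..b} \<Longrightarrow> \<bar>\<phi>' x\<bar> \<le> K"
    and "s \<in> {a..b}" "t \<in> {a..b}"
  shows "\<bar>\<phi> s - \<phi> t\<bar> \<le> K * \<bar>s - t\<bar>"
proof -
  have *: "\<bar>\<phi> q - \<phi> p\<bar> \<le> K * (q - p)" if "p < q" "p \<in> {a..b}" "q \<in> {a..b}" for p q
  proof -
    obtain z where z: "p < z" "z < q" "\<phi> q - \<phi> p = (q - p) * \<phi>' z"
      using MVT2[OF \<open>p < q\<close>, of \<phi> \<phi>'] assms(1) by blast
    have "\<bar>\<phi>' z\<bar> \<le> K" using assms(2) z that by auto
    then show ?thesis using z(3) \<open>p < q\<close> by (simp add: abs_mult mult.commute mult_left_mono)
  qed
  consider "s < t" | "s = t" | "t < s" by linarith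
  then show ?thesis
  proof cases
    case 1 then show ?thesis using *[of s t] assms by (simp add: abs_minus_commute)
  next
    case 3 then show ?thesis using *[of t s] assms by simp
  qed simp
qed



lemma E_increment:
  fixes f \<phi> F :: "real \<Rightarrow> real"
  assumes fi: "f integrable_on {a..b}" and fpi: "(\<lambda>t. f t * \<phi> t) integrable_on {a..b}"
    and Fd: "\<And>x y. a \<le> x \<Longrightarrow> x \<le> y \<Longrightarrow> y \<le> b \<Longrightarrow> F y - F x = integral {x..y} f"
    and uv: "a \<le> u" "u \<le> v" "v \<le> b"
  shows "(F v * \<phi> v - integral {a..v} (\<lambda>t. f t * \<phi> t)) - (F u * \<phi> u - integral {a..u} (\<lambda>t. f t * \<phi> t))
       = F v * (\<phi> v - \<phi> u) - integral {u..v} (\<lambda>t. (\<phi> t - \<phi> u) * f t)"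
proof -
  have fpi2: "(\<lambda>t. f t * \<phi> t) integrable_on {a..v}" using fpi integrable_on_subinterval uv by fastforce
  have fpi3: "(\<lambda>t. f t * \<phi> t) integrable_on {u..v}" using fpi integrable_on_subinterval uv by fastforce
  have fi3: "f integrable_on {u..v}" using fi integrable_on_subinterval uv by fastforce
  have c: "integral {a..u} (\<lambda>t. f t * \<phi> t) + integral {u..v} (\<lambda>t. f t * \<phi> t) = integral {a..v} (\<lambda>t. f t * \<phi> t)"
    by (rule Henstock_Kurzweil_Integration.integral_combine[OF uv(1,2) fpi2])
  have eq: "(\<lambda>t. (\<phi> t - \<phi> u) * f t) = (\<lambda>t. f t * \<phi> t - \<phi> u * f t)" by (auto simp: algebra_simps)
  have d: "integral {u..v} (\<lambda>t. (\<phi> t - \<phi> u) * f t) = integral {u..v} (\<lambda>t. f t * \<phi> t) - \<phi> u * integral {u..v} f"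
  proof -
    have "(\<lambda>t. \<phi> u * f t) integrable_on {u..v}" using fi3 integrable_on_mult_right by blast
    then show ?thesis unfolding eq using fpi3 by (simp add: integral_diff)
  qed
  have "F v - F u = integral {u..v} f" using Fd uv by auto
  then show ?thesis using c d by (simp add: algebra_simps)
qed

lemma E_deriv:
  fixes f \<phi> \<phi>' F :: "real \<Rightarrow> real"
  assumes ab: "a \<le> b" and fi: "f integrable_on {a..b}" and fpi: "(\<lambda>t. f t * \<phi> t) integrable_on {a..b}"
    and Fd: "\<And>x y. a \<le> x \<Longrightarrow> x \<le> y \<Longrightarrow> y \<le> b \<Longrightarrow> F y - F x = integral {x..y} f"
    and Fc: "continuous_on {a..b} F"
    and \<phi>d: "\<And>x. (\<phi> has_real_derivative \<phi>' x) (at x)"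
    and K: "K > 0" and lip: "\<And>s t. s \<in> {a..b} \<Longrightarrow> t \<in> {a..b} \<Longrightarrow> \<bar>\<phi> s - \<phi> t\<bar> \<le> K * \<bar>s - t\<bar>"
    and x: "x \<in> {a..b}"
  shows "((\<lambda>y. F y * \<phi> y - integral {a..y} (\<lambda>t. f t * \<phi> t)) has_real_derivative (F x * \<phi>' x)) (at x within {a..b})"
proof -
  define E where "E y = F y * \<phi> y - integral {a..y} (\<lambda>t. f t * \<phi> t)" for y
  define L where "L = F x * \<phi>' x"
  have main: "\<exists>d>0. \<forall>y\<in>{a..b}. \<bar>y - x\<bar> < d \<longrightarrow> \<bar>E y - E x - L * (y - x)\<bar> \<le> e/2 * \<bar>y - x\<bar>"
    if e: "e > 0" for e
  proof -
    define \<eta> where "\<eta> = e / (28 * K)"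
    have \<eta>: "\<eta> > 0" using e K by (simp add: \<eta>_def)
    have K\<eta>: "7 * K * \<eta> = e / 4" using K by (simp add: \<eta>_def field_simps)
    obtain d1 where d1: "d1 > 0" "\<And>y. y \<in> {a..b} \<Longrightarrow> \<bar>y - x\<bar> < d1 \<Longrightarrow> \<bar>F y - F x\<bar> < \<eta>"
      using Fc x \<eta> unfolding continuous_on_iff dist_real_def by blast
    define e' where "e' = e / (4 * (\<bar>F x\<bar> + 1))"
    have e': "e' > 0" using e by (simp add: e'_def add_pos_nonneg)
    obtain d2 where d2: "d2 > 0" "\<And>y. \<bar>y - x\<bar> < d2 \<Longrightarrow> \<bar>\<phi> y - \<phi> x - \<phi>' x * (y - x)\<bar> \<le> e' * \<bar>y - x\<bar>"
      using deriv_approx[OF \<phi>d e'] by blast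
    have Fe': "\<bar>F x\<bar> * e' \<le> e/4"
    proof -
      have "\<bar>F x\<bar> * e' = e/4 * (\<bar>F x\<bar> / (\<bar>F x\<bar> + 1))" by (simp add: e'_def field_simps)
      also have "\<dots> \<le> e/4 * 1"
        using e by (intro mult_left_mono) (auto simp: divide_le_eq_1)
      finally show ?thesis by simp
    qed
    show ?thesis
    proof (intro exI[of _ "min d1 d2"] conjI ballI impI)
      show "min d1 d2 > 0" using d1 d2 by simp
      fix y assume y: "y \<in> {a..b}" "\<bar>y - x\<bar> < min d1 d2"
      have sub: "\<bar>integral {s..t} f\<bar> \<le> 2*\<eta>" if st: "min x y \<le> s" "s \<le> t" "t \<le> max x y" for s t
      proof -
        have "s \<in> {a..b}" "t \<in> {a..b}" "\<bar>s - x\<bar> < d1" "\<bar>t - x\<bar> < d1" using st x y by auto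
        then have "\<bar>F s - F x\<bar> < \<eta>" "\<bar>F t - F x\<bar> < \<eta>" using d1 by auto
        moreover have "F t - F s = integral {s..t} f" using Fd st x y by auto
        ultimately show ?thesis by linarith
      qed
      have Dphi: "\<bar>\<phi> y - \<phi> x - \<phi>' x * (y - x)\<bar> \<le> e' * \<bar>y - x\<bar>" using d2 y by auto
      have Fyx: "\<bar>F y - F x\<bar> < \<eta>" using d1 y by auto
      have phiyx: "\<bar>\<phi> y - \<phi> x\<bar> \<le> K * \<bar>y - x\<bar>" using lip x y by auto
      have p1: "\<bar>(F y - F x) * (\<phi> y - \<phi> x)\<bar> \<le> \<eta> * (K * \<bar>y - x\<bar>)"
        unfolding abs_mult using Fyx phiyx by (intro mult_mono) auto
      have p2: "\<bar>F x * (\<phi> y - \<phi> x - \<phi>' x * (y - x))\<bar> \<le> e/4 * \<bar>y - x\<bar>"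
      proof -
        have "\<bar>F x * (\<phi> y - \<phi> x - \<phi>' x * (y - x))\<bar> \<le> \<bar>F x\<bar> * (e' * \<bar>y - x\<bar>)"
          unfolding abs_mult using Dphi by (intro mult_left_mono) auto
        also have "\<dots> = (\<bar>F x\<bar> * e') * \<bar>y - x\<bar>" by simp
        also have "\<dots> \<le> e/4 * \<bar>y - x\<bar>" using Fe' by (intro mult_right_mono) auto
        finally show ?thesis .
      qed
      show "\<bar>E y - E x - L * (y - x)\<bar> \<le> e/2 * \<bar>y - x\<bar>"
      proof (cases "x \<le> y")
        case True
        have inc: "E y - E x = F y * (\<phi> y - \<phi> x) - integral {x..y} (\<lambda>t. (\<phi> t - \<phi> x) * f t)"
          using E_increment[OF fi fpi Fd, of x y] x y True unfolding E_def by auto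
        have fixy: "f integrable_on {x..y}" using fi integrable_on_subinterval x y by fastforce
        have I: "\<bar>integral {x..y} (\<lambda>t. (\<phi> t - \<phi> x) * f t)\<bar> \<le> (2 * \<bar>\<phi> x - \<phi> x\<bar> + 3 * K * (y - x)) * (2*\<eta>)"
        proof (rule lip_bound[OF True fixy, THEN conjunct2])
          show "0 \<le> K" using K by simp
          show "\<bar>\<phi> s - \<phi> x - (\<phi> t - \<phi> x)\<bar> \<le> K * \<bar>s - t\<bar>" if "s \<in> {x..y}" "t \<in> {x..y}" for s t
            using lip[of s t] that x y by auto
          show "\<bar>integral {s..t} f\<bar> \<le> 2 * \<eta>" if "x \<le> s" "s \<le> t" "t \<le> y" for s t
            using sub that True by auto
        qed
        have p3: "\<bar>integral {x..y} (\<lambda>t. (\<phi> t - \<phi> x) * f t)\<bar> \<le> 6 * K * \<eta> * \<bar>y - x\<bar>"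
          using I True by (simp add: algebra_simps)
        have "E y - E x - L * (y - x) = (F y - F x) * (\<phi> y - \<phi> x) + F x * (\<phi> y - \<phi> x - \<phi>' x * (y - x))
              - integral {x..y} (\<lambda>t. (\<phi> t - \<phi> x) * f t)"
          unfolding inc L_def by (simp add: algebra_simps)
        then have "\<bar>E y - E x - L * (y - x)\<bar> \<le> \<eta> * (K * \<bar>y - x\<bar>) + e/4 * \<bar>y - x\<bar> + 6 * K * \<eta> * \<bar>y - x\<bar>"
          using p1 p2 p3 by linarith
        also have "\<dots> = (7 * K * \<eta>) * \<bar>y - x\<bar> + e/4 * \<bar>y - x\<bar>" by (simp add: algebra_simps)
        also have "\<dots> = e/2 * \<bar>y - x\<bar>" unfolding K\<eta> by (simp add: algebra_simps)
        finally show ?thesis .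
      next
        case False
        then have yx: "y \<le> x" by simp
        have inc: "E x - E y = F x * (\<phi> x - \<phi> y) - integral {y..x} (\<lambda>t. (\<phi> t - \<phi> y) * f t)"
          using E_increment[OF fi fpi Fd, of y x] x y yx unfolding E_def by auto
        have fiyx: "f integrable_on {y..x}" using fi integrable_on_subinterval x y by fastforce
        have I: "\<bar>integral {y..x} (\<lambda>t. (\<phi> t - \<phi> y) * f t)\<bar> \<le> (2 * \<bar>\<phi> y - \<phi> y\<bar> + 3 * K * (x - y)) * (2*\<eta>)"
        proof (rule lip_bound[OF yx fiyx, THEN conjunct2])
          show "0 \<le> K" using K by simp
          show "\<bar>\<phi> s - \<phi> y - (\<phi> t - \<phi> y)\<bar> \<le> K * \<bar>s - t\<bar>" if "s \<in> {y..x}" "t \<in> {y..x}" for s t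
            using lip[of s t] that x y by auto
          show "\<bar>integral {s..t} f\<bar> \<le> 2 * \<eta>" if "y \<le> s" "s \<le> t" "t \<le> x" for s t
            using sub that yx by auto
        qed
        have p3: "\<bar>integral {y..x} (\<lambda>t. (\<phi> t - \<phi> y) * f t)\<bar> \<le> 6 * K * \<eta> * \<bar>y - x\<bar>"
          using I yx by (simp add: algebra_simps)
        have "E y - E x - L * (y - x) = F x * (\<phi> y - \<phi> x - \<phi>' x * (y - x))
              + integral {y..x} (\<lambda>t. (\<phi> t - \<phi> y) * f t)"
          using inc unfolding L_def by (simp add: algebra_simps)
        then have "\<bar>E y - E x - L * (y - x)\<bar> \<le> e/4 * \<bar>y - x\<bar> + 6 * K * \<eta> * \<bar>y - x\<bar>"
          using p2 p3 by linarith
        also have "\<dots> \<le> (7 * K * \<eta>) * \<bar>y - x\<bar> + e/4 * \<bar>y - x\<bar>"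
          using K \<eta> by (simp add: algebra_simps)
        also have "\<dots> = e/2 * \<bar>y - x\<bar>" unfolding K\<eta> by (simp add: algebra_simps)
        finally show ?thesis .
      qed
    qed
  qed
  have "((\<lambda>y. (E y - E x) / (y - x)) \<longlongrightarrow> L) (at x within {a..b})"
    unfolding Lim_within
  proof (intro allI impI)
    fix e :: real assume e: "e > 0"
    obtain d where d: "d > 0" "\<And>y. y \<in> {a..b} \<Longrightarrow> \<bar>y - x\<bar> < d \<Longrightarrow> \<bar>E y - E x - L * (y - x)\<bar> \<le> e/2 * \<bar>y - x\<bar>"
      using main[OF e] by blast
    show "\<exists>d>0. \<forall>y\<in>{a..b}. 0 < dist y x \<and> dist y x < d \<longrightarrow> dist ((E y - E x) / (y - x)) L < e"
    proof (intro exI[of _ d] conjI ballI impI)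
      fix y assume y: "y \<in> {a..b}" "0 < dist y x \<and> dist y x < d"
      then have yx: "y \<noteq> x" "\<bar>y - x\<bar> < d" by (auto simp: dist_real_def)
      have "(E y - E x) / (y - x) - L = (E y - E x - L * (y - x)) / (y - x)"
        using yx by (simp add: field_simps)
      then have "\<bar>(E y - E x) / (y - x) - L\<bar> = \<bar>E y - E x - L * (y - x)\<bar> / \<bar>y - x\<bar>"
        by (simp add: abs_divide)
      also have "\<dots> \<le> e/2" using d(2)[OF y(1) yx(2)] yx by (simp add: divide_le_eq)
      also have "\<dots> < e" using e by simp
      finally show "dist ((E y - E x) / (y - x)) L < e" by (simp add: dist_real_def)
    qed (use d in auto)
  qed
  then show ?thesis unfolding has_field_derivative_iff E_def L_def .
qed



lemma compact_bound_real:
  fixes g :: "real \<Rightarrow> real"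
  assumes "continuous_on {a..b} g"
  obtains K where "K > 0" "\<And>x. x \<in> {a..b} \<Longrightarrow> \<bar>g x\<bar> \<le> K"
proof -
  have "compact (g ` {a..b})" by (rule compact_continuous_image[OF assms]) simp
  then have "bounded (g ` {a..b})" by (rule compact_imp_bounded)
  then obtain K where "K > 0" "\<forall>y\<in>g ` {a..b}. norm y \<le> K" unfolding bounded_pos by blast
  then show ?thesis using that by auto
qed

lemma ibp:
  fixes f \<phi> \<phi>' F :: "real \<Rightarrow> real"
  assumes ab: "a \<le> b" and fi: "f integrable_on {a..b}"
    and Fd: "\<And>x y. a \<le> x \<Longrightarrow> x \<le> y \<Longrightarrow> y \<le> b \<Longrightarrow> F y - F x = integral {x..y} f"
    and Fc: "continuous_on {a..b} F"
    and \<phi>d: "\<And>x. (\<phi> has_real_derivative \<phi>' x) (at x)"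
    and \<phi>c: "continuous_on {a..b} \<phi>'"
  shows "(\<lambda>x. f x * \<phi> x) integrable_on {a..b} \<and>
    integral {a..b} (\<lambda>x. f x * \<phi> x) = F b * \<phi> b - F a * \<phi> a - integral {a..b} (\<lambda>x. F x * \<phi>' x)"
proof -
  obtain K where K: "K > 0" "\<And>x. x \<in> {a..b} \<Longrightarrow> \<bar>\<phi>' x\<bar> \<le> K"
    using compact_bound_real[OF \<phi>c] by blast
  have lip: "\<bar>\<phi> s - \<phi> t\<bar> \<le> K * \<bar>s - t\<bar>" if "s \<in> {a..b}" "t \<in> {a..b}" for s t
    using lipschitz_from_deriv[OF \<phi>d K(2) that] .
  obtain MF where MF: "MF > 0" "\<And>x. x \<in> {a..b} \<Longrightarrow> \<bar>F x\<bar> \<le> MF"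
    using compact_bound_real[OF Fc] by blast
  have eta: "\<bar>integral {s..t} f\<bar> \<le> 2 * MF" if "a \<le> s" "s \<le> t" "t \<le> b" for s t
  proof -
    have "integral {s..t} f = F t - F s" using Fd that by auto
    moreover have "\<bar>F t\<bar> \<le> MF" "\<bar>F s\<bar> \<le> MF" using MF that by auto
    ultimately show ?thesis by linarith
  qed
  have "(\<lambda>t. \<phi> t * f t) integrable_on {a..b}"
    using lip_bound[OF ab fi _ lip eta] K by auto
  then have fpi: "(\<lambda>t. f t * \<phi> t) integrable_on {a..b}" by (simp add: mult.commute)
  define G where "G y = (F y * \<phi> y - integral {a..y} (\<lambda>t. f t * \<phi> t)) - integral {a..y} (\<lambda>t. F t * \<phi>' t)" for y
  have Fpc: "continuous_on {a..b} (\<lambda>t. F t * \<phi>' t)" using Fc \<phi>c by (intro continuous_intros)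
  have "(G has_vector_derivative 0) (at x within {a..b})" if x: "x \<in> {a..b}" for x
  proof -
    have d1: "((\<lambda>y. F y * \<phi> y - integral {a..y} (\<lambda>t. f t * \<phi> t)) has_real_derivative (F x * \<phi>' x)) (at x within {a..b})"
      by (rule E_deriv[OF ab fi fpi Fd Fc \<phi>d K(1) lip x])
    have d2: "((\<lambda>y. integral {a..y} (\<lambda>t. F t * \<phi>' t)) has_real_derivative (F x * \<phi>' x)) (at x within {a..b})"
      using integral_has_vector_derivative[OF Fpc x] by (simp add: has_real_derivative_iff_has_vector_derivative)
    have "(G has_real_derivative (F x * \<phi>' x - F x * \<phi>' x)) (at x within {a..b})"
      unfolding G_def by (rule DERIV_diff[OF d1 d2])
    then show ?thesis by (simp add: has_real_derivative_iff_has_vector_derivative)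
  qed
  from fundamental_theorem_of_calculus[OF ab this]
  have "((\<lambda>x. 0) has_integral (G b - G a)) {a..b}" .
  then have "G b = G a" using has_integral_unique[OF _ has_integral_0] by fastforce
  then show ?thesis using fpi by (simp add: G_def algebra_simps)
qed



lemma lim_bound_top:
  fixes F :: "real \<Rightarrow> real"
  assumes "(F \<longlongrightarrow> 0) at_top" "\<And>y. y \<ge> x \<Longrightarrow> \<bar>F y - F x\<bar> \<le> c"
  shows "\<bar>F x\<bar> \<le> c"
proof (rule field_le_epsilon)
  fix e :: real assume e: "e > 0"
  have "\<forall>\<^sub>F y in at_top. dist (F y) 0 < e" using assms(1) e by (rule tendstoD)
  then obtain N where N: "\<And>y. y \<ge> N \<Longrightarrow> \<bar>F y\<bar> < e" unfolding eventually_at_top_linorder dist_real_def by auto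
  have "\<bar>F (max N x)\<bar> < e" "\<bar>F (max N x) - F x\<bar> \<le> c" using N assms(2) by auto
  then show "\<bar>F x\<bar> \<le> c + e" by linarith
qed

lemma lim_bound_bot:
  fixes F :: "real \<Rightarrow> real"
  assumes "(F \<longlongrightarrow> 0) at_bot" "\<And>y. y \<le> x \<Longrightarrow> \<bar>F x - F y\<bar> \<le> c"
  shows "\<bar>F x\<bar> \<le> c"
proof (rule field_le_epsilon)
  fix e :: real assume e: "e > 0"
  have "\<forall>\<^sub>F y in at_bot. dist (F y) 0 < e" using assms(1) e by (rule tendstoD)
  then obtain N where N: "\<And>y. y \<le> N \<Longrightarrow> \<bar>F y\<bar> < e" unfolding eventually_at_bot_linorder dist_real_def by auto
  have "\<bar>F (min N x)\<bar> < e" "\<bar>F x - F (min N x)\<bar> \<le> c" using N assms(2) by auto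
  then show "\<bar>F x\<bar> \<le> c + e" by linarith
qed

lemma tail_bound:
  fixes f :: "real \<Rightarrow> real"
  assumes f0: "(f has_integral 0) UNIV" and \<alpha>: "\<alpha> > 0"
    and gi: "(\<lambda>t. \<bar>t\<bar> powr \<alpha> * f t) integrable_on UNIV"
    and M: "\<And>u v. \<bar>integral {u..v} (\<lambda>t. \<bar>t\<bar> powr \<alpha> * f t)\<bar> \<le> M"
    and x: "\<bar>x\<bar> \<ge> 1"
  shows "\<bar>integral {..x} f\<bar> \<le> 2 * M * \<bar>x\<bar> powr (-\<alpha>)"
proof -
  define g where "g = (\<lambda>t. \<bar>t\<bar> powr \<alpha> * f t)"
  define w where "w t = \<bar>t\<bar> powr (-\<alpha>)" for t :: real
  have M0: "M \<ge> 0" using M[of 0 0] by simp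
  have fw: "w t * g t = f t" if "t \<noteq> 0" for t
  proof -
    have "w t * g t = (\<bar>t\<bar> powr (-\<alpha>) * \<bar>t\<bar> powr \<alpha>) * f t" by (simp add: w_def g_def)
    also have "\<bar>t\<bar> powr (-\<alpha>) * \<bar>t\<bar> powr \<alpha> = 1" using that by (simp add: powr_add[symmetric])
    finally show ?thesis by simp
  qed
  have gi': "g integrable_on {u..v}" for u v
    using gi integrable_on_subinterval unfolding g_def by blast
  have wmono: "w t \<le> w s" if "0 < \<bar>s\<bar>" "\<bar>s\<bar> \<le> \<bar>t\<bar>" for s t
    unfolding w_def using that \<alpha> by (intro powr_mono2') auto
  have w0: "w t \<ge> 0" for t by (simp add: w_def)
  have Mg: "\<bar>integral {u..v} g\<bar> \<le> M" for u v using M by (simp add: g_def)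
  let ?F = "\<lambda>y. integral {..y} f"
  show ?thesis
  proof (cases "x \<ge> 1")
    case True
    have "\<bar>?F y - ?F x\<bar> \<le> 2 * M * \<bar>x\<bar> powr (-\<alpha>)" if y: "y \<ge> x" for y
    proof -
      have "?F y - ?F x = integral {x..y} f" using hk_halfline_diff[OF f0 y] by simp
      also have "\<dots> = integral {x..y} (\<lambda>t. w t * g t)"
        by (rule integral_cong) (use True fw in auto)
      also have "\<dots> = - integral {x..y} (\<lambda>t. (- w t) * g t)" by simp
      finally have eq: "?F y - ?F x = - integral {x..y} (\<lambda>t. (- w t) * g t)" .
      have "\<bar>integral {x..y} (\<lambda>t. (- w t) * g t)\<bar> \<le> (\<bar>- w x\<bar> + \<bar>- w y\<bar>) * M"
      proof (rule smvt_bound[OF y gi', THEN conjunct2])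
        show "- w s \<le> - w t" if "x \<le> s" "s \<le> t" "t \<le> y" for s t
          using wmono[of s t] that True by auto
        show "\<bar>integral {s..t} g\<bar> \<le> M" for s t by (rule Mg)
      qed
      also have "\<dots> \<le> (w x + w x) * M"
        using wmono[of x y] w0[of x] w0[of y] True y M0 by (intro mult_right_mono) auto
      finally show ?thesis unfolding eq by (simp add: w_def algebra_simps)
    qed
    then show ?thesis by (rule lim_bound_top[OF hk_lim_top[OF f0]])
  next
    case False
    then have xn: "x \<le> -1" using x by auto
    have "\<bar>?F x - ?F y\<bar> \<le> 2 * M * \<bar>x\<bar> powr (-\<alpha>)" if y: "y \<le> x" for y
    proof -
      have "?F x - ?F y = integral {y..x} f" using hk_halfline_diff[OF f0 y] by simp
      also have "\<dots> = integral {y..x} (\<lambda>t. w t * g t)"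
        by (rule integral_cong) (use xn fw in auto)
      finally have eq: "?F x - ?F y = integral {y..x} (\<lambda>t. w t * g t)" .
      have "\<bar>integral {y..x} (\<lambda>t. w t * g t)\<bar> \<le> (\<bar>w y\<bar> + \<bar>w x\<bar>) * M"
      proof (rule smvt_bound[OF y gi', THEN conjunct2])
        show "w s \<le> w t" if "y \<le> s" "s \<le> t" "t \<le> x" for s t
          using wmono[of t s] that xn by auto
        show "\<bar>integral {s..t} g\<bar> \<le> M" for s t by (rule Mg)
      qed
      also have "\<dots> \<le> (w x + w x) * M"
        using wmono[of x y] w0[of x] w0[of y] xn y M0 by (intro mult_right_mono) auto
      finally show ?thesis unfolding eq by (simp add: w_def algebra_simps)
    qed
    then show ?thesis by (rule lim_bound_bot[OF hk_lim_bot[OF f0]])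
  qed
qed



lemma hk_to_leb:
  fixes f :: "real \<Rightarrow> real"
  assumes "f integrable_on UNIV" "\<And>x. f x \<ge> 0"
  shows "integrable lebesgue f"
proof -
  have "f absolutely_integrable_on UNIV" by (rule nonnegative_absolutely_integrable_1) (use assms in auto)
  then show ?thesis unfolding set_integrable_def by simp
qed

lemma dominating_integrable:
  fixes s C :: real
  assumes s: "s > 1"
  shows "integrable lebesgue (\<lambda>x. C * ((if x \<in> {1..} then x powr (-s) else 0) +
             (if -x \<in> {1..} then (-x) powr (-s) else 0) + (if x \<in> {-1..1} then 1 else 0)))"
proof -
  define h1 where "h1 = (\<lambda>x::real. if x \<in> {1..} then x powr (-s) else 0)"
  define h2 where "h2 = (\<lambda>x::real. if x \<in> {-1..1} then 1 else (0::real))"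
  have "(\<lambda>x. x powr (-s)) integrable_on {1::real..}"
    using has_integral_powr_to_inf[of "-s" 1] s by (auto simp: integrable_on_def)
  then have "h1 integrable_on UNIV" unfolding h1_def by (simp only: integrable_restrict_UNIV)
  then have l1: "integrable lebesgue h1" by (rule hk_to_leb) (simp add: h1_def)
  have l1': "integrable lebesgue (\<lambda>x. h1 (-x))"
    using lebesgue_integrable_real_affine[OF l1, of "-1" 0] by simp
  have "(\<lambda>x. 1::real) integrable_on {-1..1::real}" by auto
  then have "h2 integrable_on UNIV" unfolding h2_def by (simp only: integrable_restrict_UNIV)
  then have l2: "integrable lebesgue h2" by (rule hk_to_leb) (simp add: h2_def)
  have "integrable lebesgue (\<lambda>x. C * (h1 x + h1 (-x) + h2 x))"
    using l1 l1' l2 by (intro integrable_mult_right Bochner_Integration.integrable_add)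
  then show ?thesis by (simp add: h1_def h2_def)
qed


lemma Lp_part:
  fixes f :: "real \<Rightarrow> real"
  assumes p: "1 \<le> p" and f0: "(f has_integral 0) UNIV" and \<alpha>: "\<alpha> > 1/p"
    and gi: "(\<lambda>t. \<bar>t\<bar> powr \<alpha> * f t) integrable_on UNIV"
  shows "in_Lp p (\<lambda>x. integral {..x} f)"
proof -
  let ?F = "\<lambda>x. integral {..x} f"
  have \<alpha>0: "\<alpha> > 0" using \<alpha> p by (smt (verit) divide_pos_pos)
  obtain M where M: "\<And>u v. \<bar>integral {u..v} (\<lambda>t. \<bar>t\<bar> powr \<alpha> * f t)\<bar> \<le> M"
    using hk_interval_bound[OF integrable_integral[OF gi]] by blast
  have M0: "M \<ge> 0" using M[of 0 0] by simp
  have Fc: "continuous_on UNIV ?F" by (rule hk_cont[OF f0])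
  then have Fc1: "continuous_on {-1..1} ?F" by (rule continuous_on_subset) simp
  obtain MF where MF: "MF > 0" "\<And>x. x \<in> {-1..1} \<Longrightarrow> \<bar>?F x\<bar> \<le> MF"
    using compact_bound_real[OF Fc1] by blast
  have tail: "\<bar>?F x\<bar> \<le> 2 * M * \<bar>x\<bar> powr (-\<alpha>)" if "\<bar>x\<bar> \<ge> 1" for x
    by (rule tail_bound[OF f0 \<alpha>0 gi M that])
  define B where "B = max MF (2 * M)"
  have FB: "\<bar>?F x\<bar> \<le> B" for x
  proof (cases "\<bar>x\<bar> \<le> 1")
    case True
    then have "\<bar>?F x\<bar> \<le> MF" using MF(2)[of x] by (simp add: abs_le_iff)
    then show ?thesis by (simp add: B_def)
  next
    case False
    have "\<bar>x\<bar> powr (-\<alpha>) \<le> 1 powr (-\<alpha>)" using False \<alpha>0 by (intro powr_mono2') auto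
    then have "2 * M * \<bar>x\<bar> powr (-\<alpha>) \<le> 2 * M" using M0 by (simp add: mult_left_le)
    then show ?thesis using tail[of x] False by (auto simp: B_def)
  qed
  have B0: "B \<ge> 0" using MF by (simp add: B_def)
  define s where "s = \<alpha> * p"
  have s: "s > 1" using \<alpha> p by (simp add: s_def field_simps)
  define C where "C = max (B powr p) ((2 * M) powr p)"
  define h where "h = (\<lambda>x. C * ((if x \<in> {1..} then x powr (-s) else 0) +
             (if -x \<in> {1..} then (-x) powr (-s) else 0) + (if x \<in> {-1..1} then 1 else 0)))"
  have hi: "integrable lebesgue h" unfolding h_def by (rule dominating_integrable[OF s])
  have C0: "C \<ge> 0" unfolding C_def by (rule order_trans[OF _ max.cobounded1]) simp
  have bound: "\<bar>?F x\<bar> powr p \<le> h x" for x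
  proof (cases "\<bar>x\<bar> \<le> 1")
    case True
    have "\<bar>?F x\<bar> powr p \<le> B powr p" using FB[of x] p by (intro powr_mono2) auto
    also have "\<dots> \<le> C" by (simp add: C_def)
    also have "\<dots> \<le> h x"
    proof -
      have "1 \<le> (if x \<in> {1..} then x powr (-s) else 0) +
             (if -x \<in> {1..} then (-x) powr (-s) else 0) + (if x \<in> {-1..1} then 1 else 0)"
        using True by auto
      then show ?thesis unfolding h_def using C0 by (simp add: mult_le_cancel_left1)
    qed
    finally show ?thesis .
  next
    case False
    have "\<bar>?F x\<bar> powr p \<le> (2 * M * \<bar>x\<bar> powr (-\<alpha>)) powr p" using tail[of x] False p by (intro powr_mono2) auto
    also have "\<dots> = (2 * M) powr p * \<bar>x\<bar> powr (-s)"
      using M0 by (simp add: powr_mult powr_powr s_def)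
    also have "\<dots> \<le> C * \<bar>x\<bar> powr (-s)" by (intro mult_right_mono) (auto simp: C_def)
    also have "\<dots> \<le> h x"
    proof -
      have "\<bar>x\<bar> powr (-s) \<le> (if x \<in> {1..} then x powr (-s) else 0) +
             (if -x \<in> {1..} then (-x) powr (-s) else 0) + (if x \<in> {-1..1} then 1 else 0)"
        using False by auto
      then show ?thesis unfolding h_def using C0 by (intro mult_left_mono) auto
    qed
    finally show ?thesis .
  qed
  have Fm: "?F \<in> borel_measurable lebesgue"
    using Fc by (simp add: continuous_imp_measurable_on measurable_on_imp_borel_measurable_lebesgue_UNIV)
  have "integrable lebesgue (\<lambda>x. \<bar>?F x\<bar> powr p)"
  proof (rule Bochner_Integration.integrable_bound[OF hi])
    show "(\<lambda>x. \<bar>?F x\<bar> powr p) \<in> borel_measurable lebesgue" using Fm by measurable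
    show "AE x in lebesgue. norm (\<bar>?F x\<bar> powr p) \<le> norm (h x)"
      using bound by (auto intro!: AE_I2 order_trans[OF _ abs_ge_self])
  qed
  then show ?thesis using Fm by (simp add: in_Lp_def)
qed



lemma distr_part:
  fixes f :: "real \<Rightarrow> real"
  assumes f0: "(f has_integral 0) UNIV"
  shows "distr_deriv (\<lambda>x. integral {..x} f) f"
  unfolding distr_deriv_def
proof (intro allI impI)
  fix \<phi> :: "real \<Rightarrow> real"
  assume tf: "test_function \<phi>"
  let ?F = "\<lambda>x. integral {..x} f"
  have d0: "\<phi> differentiable_on UNIV" using tf unfolding test_function_def by (metis funpow_0)
  have d1: "deriv \<phi> differentiable_on UNIV" using tf unfolding test_function_def
    by (metis funpow_0 funpow_Suc_right o_apply)
  have \<phi>d: "(\<phi> has_real_derivative deriv \<phi> x) (at x)" for x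
    using d0 by (simp add: DERIV_deriv_iff_real_differentiable differentiable_on_def)
  have \<phi>'c: "continuous_on UNIV (deriv \<phi>)" using d1 by (rule differentiable_imp_continuous_on)
  have "bounded (closure {x. \<phi> x \<noteq> 0})" using tf unfolding test_function_def by (simp add: compact_imp_bounded)
  then obtain R where R: "R > 0" "\<And>x. x \<in> closure {x. \<phi> x \<noteq> 0} \<Longrightarrow> norm x \<le> R"
    unfolding bounded_pos by blast
  have \<phi>0: "\<phi> x = 0" if "\<bar>x\<bar> > R" for x
    using R(2)[of x] closure_subset[of "{x. \<phi> x \<noteq> 0}"] that by force
  have \<phi>'0: "deriv \<phi> x = 0" if x: "\<bar>x\<bar> > R" for x
  proof -
    have "((\<lambda>_. 0) has_real_derivative deriv \<phi> x) (at x)"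
    proof (rule has_field_derivative_transform_within_open[OF \<phi>d])
      show "open {y::real. R < \<bar>y\<bar>}" by (intro open_Collect_less continuous_intros)
    qed (use x \<phi>0 in auto)
    then show ?thesis using DERIV_unique[OF _ DERIV_const] by blast
  qed
  define a where "a = -R - 1"
  define b where "b = R + 1"
  have ab: "a \<le> b" using R by (simp add: a_def b_def)
  have fi: "f integrable_on {a..b}" using f0 integrable_on_subinterval by blast
  have Fd: "?F y - ?F x = integral {x..y} f" if "a \<le> x" "x \<le> y" "y \<le> b" for x y
    using hk_halfline_diff[OF f0 that(2)] by simp
  have Fc: "continuous_on {a..b} ?F" using hk_cont[OF f0] by (rule continuous_on_subset) simp
  have \<phi>'c': "continuous_on {a..b} (deriv \<phi>)" using \<phi>'c by (rule continuous_on_subset) simp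
  note I = ibp[OF ab fi Fd Fc \<phi>d \<phi>'c']
  have \<phi>ab: "\<phi> a = 0" "\<phi> b = 0" using R by (auto intro!: \<phi>0 simp: a_def b_def)
  have out: "\<bar>x\<bar> > R" if "x \<notin> {a..b}" for x using that R by (auto simp: a_def b_def)
  have h1: "((\<lambda>x. f x * \<phi> x) has_integral integral {a..b} (\<lambda>x. f x * \<phi> x)) UNIV"
    by (rule has_integral_on_superset[OF integrable_integral[OF I[THEN conjunct1]]])
       (use out \<phi>0 in auto)
  have Fpi: "(\<lambda>x. ?F x * deriv \<phi> x) integrable_on {a..b}"
    by (rule integrable_continuous_real) (use Fc \<phi>'c' in \<open>intro continuous_intros\<close>)
  have h2: "((\<lambda>x. ?F x * deriv \<phi> x) has_integral integral {a..b} (\<lambda>x. ?F x * deriv \<phi> x)) UNIV"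
    by (rule has_integral_on_superset[OF integrable_integral[OF Fpi]])
       (use out \<phi>'0 in auto)
  show "(\<lambda>x. f x * \<phi> x) integrable_on UNIV \<and>
        (\<lambda>x. ?F x * deriv \<phi> x) integrable_on UNIV \<and>
        integral UNIV (\<lambda>x. ?F x * deriv \<phi> x) = - integral UNIV (\<lambda>x. f x * \<phi> x)"
    using h1 h2 I \<phi>ab by (auto simp: integral_unique integrable_on_def)
qed


theorem mainTheorem11:
  fixes p :: real and f :: "real \<Rightarrow> real"
  assumes "1 \<le> p"
    and "\<And>a b. f integrable_on {a..b}"
    and "(f has_integral 0) UNIV"
    and "\<exists>\<alpha>>1/p. (\<lambda>t. \<bar>t\<bar> powr \<alpha> * f t) integrable_on UNIV"
  shows "(\<forall>x. f integrable_on {..x})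
    \<and> in_Lp p (\<lambda>x. integral {..x} f)
    \<and> distr_deriv (\<lambda>x. integral {..x} f) f"
proof -
  from assms(4) obtain \<alpha> where \<alpha>: "\<alpha> > 1/p"
    and gi: "(\<lambda>t. \<bar>t\<bar> powr \<alpha> * f t) integrable_on UNIV" by blast
  show ?thesis
    using hk_halfline_integrable[OF assms(3)] Lp_part[OF assms(1) assms(3) \<alpha> gi] distr_part[OF assms(3)]
    by blast
qed

end
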